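(* Let $\alpha\in(0,\pi/2)$ and let $X_0=(0,0),X_1,\dots,X_n$ be points on the $x$-axis, $X_i=(x_i,0)$, none of $X_1,\dots,X_n$ redundant. For $0\le j\le n$ let $T_j$ be the apex of the feasibility cone $\mathrm{FC}(X_0,\dots,X_j)$. Then for every $0\le i\le n$, the polygonal path $T_0,T_1,\dots,T_i$ has total length $\sum_{k=0}^{i-1}|T_kT_{k+1}|$ equal to the distance $|X_iT_i|$ between $(x_i,0)$ and $T_i$.
   Context: For a point $X=(x,0)$ and $\alpha\in(0,\pi/2)$, the feasibility cone is $\mathrm{FC}(X)=\{(u,v): v\ge0,\ |u-x|\le v\tan\alpha\}$; for a finite set of points on the $x$-axis, its feasibility cone is the intersection of their cones. If the points have minimum $x$-coordinate $l$ and maximum $x$-coordinate $m$, this intersection is the cone $\{(u,v): v\ge0,\ l\le u - \ldots\}$ with apex $\left(\frac{l+m}{2},\frac{m-l}{2\tan\alpha}\right)$, i.e. the set of points whose left and right coverage bounds $u\mp v\tan\alpha$ contain $[l,m]$. A point $X_{i+1}=(x_{i+1},0)$ is redundant if $x_{i+1}\in[\min_{j\le i}x_j,\max_{j\le i}x_j]$. *)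

theory Defs
  imports "HOL-Analysis.Analysis"
begin

text \<open>Points on the x-axis are given by their x-coordinates x 0, x 1, ...; planar points are real \<times> real
  (Euclidean distance via dist on the product type).\<close>

definition FC_point :: "real \<Rightarrow> real \<Rightarrow> (real \<times> real) set" where
  "FC_point \<alpha> p = {(u, v). v \<ge> 0 \<and> \<bar>u - p\<bar> \<le> v * tan \<alpha>}"

definition FC :: "real \<Rightarrow> real set \<Rightarrow> (real \<times> real) set" where
  "FC \<alpha> P = (\<Inter>p\<in>P. FC_point \<alpha> p)"

definition lo :: "(nat \<Rightarrow> real) \<Rightarrow> nat \<Rightarrow> real" where
  "lo x j = Min (x ` {0..j})"

definition hi :: "(nat \<Rightarrow> real) \<Rightarrow> nat \<Rightarrow> real" where
  "hi x j = Max (x ` {0..j})"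

definition apex :: "real \<Rightarrow> (nat \<Rightarrow> real) \<Rightarrow> nat \<Rightarrow> real \<times> real" where
  "apex \<alpha> x j = ((lo x j + hi x j) / 2, (hi x j - lo x j) / (2 * tan \<alpha>))"

definition redundant :: "(nat \<Rightarrow> real) \<Rightarrow> nat \<Rightarrow> bool" where
  "redundant x i \<longleftrightarrow> x (Suc i) \<in> {lo x i .. hi x i}"

end

theory Submission
  imports Defs
begin

lemma dist_aux:
  fixes a b c e d t :: real
  assumes "d \<ge> 0" "t > 0" "\<bar>a - c\<bar> = d/2" "\<bar>b - e\<bar> = d/(2*t)"
  shows "dist (a,b) (c,e) = sqrt (1/4 + 1/(4*t^2)) * d"
proof -
  have "dist (a,b) (c,e) = sqrt ((a-c)^2 + (b-e)^2)"
    by (simp add: dist_Pair_Pair dist_real_def)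
  also have "(a-c)^2 + (b-e)^2 = \<bar>a-c\<bar>^2 + \<bar>b-e\<bar>^2" by simp
  also have "\<dots> = (d/2)^2 + (d/(2*t))^2" by (simp only: assms(3,4))
  also have "\<dots> = d^2 * (1/4 + 1/(4*t^2))" using assms
    by (simp add: power_divide power_mult_distrib field_simps)
  also have "sqrt \<dots> = sqrt (1/4 + 1/(4*t^2)) * d"
    using assms(1) by (simp add: real_sqrt_mult)
  finally show ?thesis .
qed

lemma lo_Suc: "lo x (Suc k) = min (lo x k) (x (Suc k))"
proof -
  have "x ` {0..Suc k} = insert (x (Suc k)) (x ` {0..k})"
    by (auto simp: atLeast0_atMost_Suc)
  thus ?thesis unfolding lo_def by (simp add: min.commute)
qed

lemma hi_Suc: "hi x (Suc k) = max (hi x k) (x (Suc k))"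
proof -
  have "x ` {0..Suc k} = insert (x (Suc k)) (x ` {0..k})"
    by (auto simp: atLeast0_atMost_Suc)
  thus ?thesis unfolding hi_def by (simp add: max.commute)
qed

lemma lo_le_hi: "lo x k \<le> hi x k"
  unfolding lo_def hi_def by (intro order.trans[OF Min_le Max_ge]) auto

lemma lo_0: "lo x 0 = x 0" and hi_0: "hi x 0 = x 0"
  unfolding lo_def hi_def by auto

theorem lemma1:
  fixes \<alpha> :: real and x :: "nat \<Rightarrow> real" and n :: nat
  assumes "0 < \<alpha>" and "\<alpha> < pi / 2"
    and "x 0 = 0"
    and "\<forall>i < n. \<not> redundant x i"
  shows "\<forall>i \<le> n. (\<Sum>k<i. dist (apex \<alpha> x k) (apex \<alpha> x (Suc k))) = dist (x i, 0) (apex \<alpha> x i)"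
proof -
  define t where "t = tan \<alpha>"
  have t: "t > 0" unfolding t_def using assms(1,2) by (simp add: tan_gt_zero)
  define c where "c = sqrt (1/4 + 1/(4*t^2))"
  have step: "dist (apex \<alpha> x k) (apex \<alpha> x (Suc k)) = c * ((hi x (Suc k) - lo x (Suc k)) - (hi x k - lo x k))"
    if "k < n" for k
  proof -
    have nr: "x (Suc k) < lo x k \<or> x (Suc k) > hi x k"
      using assms(4) that unfolding redundant_def by auto
    have lh: "lo x k \<le> hi x k" by (rule lo_le_hi)
    show ?thesis
      using nr
    proof
      assume a: "x (Suc k) < lo x k"
      have "lo x (Suc k) = x (Suc k)" "hi x (Suc k) = hi x k"
        using a lh by (auto simp: lo_Suc hi_Suc)
      then show ?thesis unfolding apex_def c_def t_def[symmetric] using a t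
        by (intro dist_aux) (auto simp: field_simps abs_if)
    next
      assume a: "x (Suc k) > hi x k"
      have "hi x (Suc k) = x (Suc k)" "lo x (Suc k) = lo x k"
        using a lh by (auto simp: lo_Suc hi_Suc)
      then show ?thesis unfolding apex_def c_def t_def[symmetric] using a t
        by (intro dist_aux) (auto simp: field_simps abs_if)
    qed
  qed
  have sum: "(\<Sum>k<i. dist (apex \<alpha> x k) (apex \<alpha> x (Suc k))) = c * (hi x i - lo x i)"
    if "i \<le> n" for i
    using that
  proof (induction i)
    case 0
    then show ?case by (simp add: lo_0 hi_0)
  next
    case (Suc i)
    then show ?case using step[of i] by (simp add: algebra_simps)
  qed
  have ext: "x i = lo x i \<or> x i = hi x i" if "i \<le> n" for i
  proof (cases i)
    case 0 then show ?thesis by (simp add: lo_0)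
  next
    case (Suc k)
    have "\<not> redundant x k" using assms(4) that Suc by auto
    then have "x (Suc k) < lo x k \<or> x (Suc k) > hi x k"
      unfolding redundant_def by auto
    then show ?thesis using Suc lo_le_hi[of x k] by (auto simp: lo_Suc hi_Suc)
  qed
  show ?thesis
  proof (intro allI impI)
    fix i assume i: "i \<le> n"
    have lh: "lo x i \<le> hi x i" by (rule lo_le_hi)
    have "dist (x i, 0) (apex \<alpha> x i) = c * (hi x i - lo x i)"
      using ext[OF i]
    proof
      assume e: "x i = lo x i"
      show ?thesis unfolding e apex_def c_def t_def[symmetric] by (rule dist_aux) (use lh t in \<open>auto simp: field_simps abs_if\<close>)
    next
      assume e: "x i = hi x i"
      show ?thesis unfolding e apex_def c_def t_def[symmetric] by (rule dist_aux) (use lh t in \<open>auto simp: field_simps abs_if\<close>)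
    qed
    then show "(\<Sum>k<i. dist (apex \<alpha> x k) (apex \<alpha> x (Suc k))) = dist (x i, 0) (apex \<alpha> x i)"
      using sum[OF i] by simp
  qed
qed

end
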